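(* Let $\psi\subseteq\mathcal{E}_1^\omega\times\mathcal{E}_2^\omega$ be a safety relation. Then for all $\tau_1\in\mathcal{E}_1^\omega,\tau_2\in\mathcal{E}_2^\omega$: $(\tau_1,\tau_2)\in\psi\iff(\tau_1,\tau_2)\in|\psi|_{\mathit{safe}}\iff(\tau_1,\tau_2,\psi)\in\texttt{safe}$.
   Context: For $\tau\in\mathcal{E}^\omega$, $\tau[0..n)$ denotes its finite prefix of length $n$. Safety closure: $|\psi|_{\mathit{safe}}=\{(\tau_1,\tau_2)\mid\forall n\in\mathbb{N}.\ \exists\tau_1'\in\mathcal{E}_1^\omega,\tau_2'\in\mathcal{E}_2^\omega.\ (\tau_1[0..n)\cdot\tau_1',\ \tau_2[0..n)\cdot\tau_2')\in\psi\}$. A trace relation $\psi$ is a safety relation iff $|\psi|_{\mathit{safe}}\subseteq\psi$. Derivative: $\Delta_{e_1,e_2}(\psi)=\{(\tau_1,\tau_2)\mid(e_1\tau_1,e_2\tau_2)\in\psi\}$. $\texttt{safe}$ is the greatest fixed point of the monotone operator $\texttt{safeF}(C)=\{(e_1\tau_1,e_2\tau_2,\psi)\mid\Delta_{e_1,e_2}(\psi)\neq\emptyset\wedge(\tau_1,\tau_2,\Delta_{e_1,e_2}(\psi))\in C\}$ on subsets of $\mathcal{E}_1^\omega\times\mathcal{E}_2^\omega\times\mathcal{P}(\mathcal{E}_1^\omega\times\mathcal{E}_2^\omega)$. *)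

theory Defs
  imports Main "HOL-Library.Omega_Words_Fun"
begin

type_synonym ('e1, 'e2) trel = "('e1 word \<times> 'e2 word) set"

definition safe_closure :: "('e1, 'e2) trel \<Rightarrow> ('e1, 'e2) trel" where
  "safe_closure \<psi> = {(\<tau>1, \<tau>2). \<forall>n::nat. \<exists>\<tau>1' \<tau>2'.
      (prefix n \<tau>1 \<frown> \<tau>1', prefix n \<tau>2 \<frown> \<tau>2') \<in> \<psi>}"

definition safety_relation :: "('e1, 'e2) trel \<Rightarrow> bool" where
  "safety_relation \<psi> \<longleftrightarrow> safe_closure \<psi> \<subseteq> \<psi>"

definition deriv :: "'e1 \<Rightarrow> 'e2 \<Rightarrow> ('e1, 'e2) trel \<Rightarrow> ('e1, 'e2) trel" where
  "deriv e1 e2 \<psi> = {(\<tau>1, \<tau>2). ([e1] \<frown> \<tau>1, [e2] \<frown> \<tau>2) \<in> \<psi>}"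

definition safeF :: "('e1 word \<times> 'e2 word \<times> ('e1, 'e2) trel) set
                     \<Rightarrow> ('e1 word \<times> 'e2 word \<times> ('e1, 'e2) trel) set" where
  "safeF C = {([e1] \<frown> \<tau>1, [e2] \<frown> \<tau>2, \<psi>) | e1 \<tau>1 e2 \<tau>2 \<psi>.
      deriv e1 e2 \<psi> \<noteq> {} \<and> (\<tau>1, \<tau>2, deriv e1 e2 \<psi>) \<in> C}"

lemma mono_safeF: "mono safeF"
  unfolding mono_def safeF_def by blast

definition safe :: "('e1 word \<times> 'e2 word \<times> ('e1, 'e2) trel) set" where
  "safe = gfp safeF"

end

theory Submission
  imports Defs
begin

lemma prefix_Suc_split: "prefix (Suc n) t = t 0 # prefix n (suffix 1 t)"
  by (rule nth_equalityI) (auto simp: nth_Cons' subsequence_def nth_append simp del: upt_Suc)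


lemma safe_sound_aux: "\<forall>(t1::'a word) (t2::'b word) \<phi>. (t1, t2, \<phi>) \<in> safe \<longrightarrow> (\<exists>u1 u2. (prefix n t1 \<frown> u1, prefix n t2 \<frown> u2) \<in> \<phi>)"
  proof (induction n)
    case 0
    show ?case
    proof (intro allI impI)
      fix t1 :: "'a word" and t2 :: "'b word" and \<phi> assume "(t1, t2, \<phi>) \<in> safe"
      then have "(t1, t2, \<phi>) \<in> safeF safe"
        unfolding safe_def using gfp_unfold[OF mono_safeF] by blast
      then obtain e1 e2 where "deriv e1 e2 \<phi> \<noteq> {}" unfolding safeF_def by blast
      then show "\<exists>u1 u2. (prefix 0 t1 \<frown> u1, prefix 0 t2 \<frown> u2) \<in> \<phi>"
        unfolding deriv_def by auto
    qed
  next
    case (Suc n)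
    show ?case
    proof (intro allI impI)
      fix t1 :: "'a word" and t2 :: "'b word" and \<phi> assume "(t1, t2, \<phi>) \<in> safe"
      then have "(t1, t2, \<phi>) \<in> safeF safe"
        unfolding safe_def using gfp_unfold[OF mono_safeF] by blast
      then obtain e1 e2 s1 s2 where e: "t1 = [e1] \<frown> s1" "t2 = [e2] \<frown> s2"
        "(s1, s2, deriv e1 e2 \<phi>) \<in> safe"
        unfolding safeF_def by (auto simp: safe_def)
      then obtain u1 u2 where u: "(prefix n s1 \<frown> u1, prefix n s2 \<frown> u2) \<in> deriv e1 e2 \<phi>"
        using Suc.IH e(3) by blast
      have p1: "prefix (Suc n) t1 = e1 # prefix n s1"
      proof -
        have a: "suffix 1 t1 = s1" unfolding e(1) by (rule ext) simp
        have b: "t1 0 = e1" unfolding e(1) by simp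
        show ?thesis by (simp only: prefix_Suc_split a b)
      qed
      have p2: "prefix (Suc n) t2 = e2 # prefix n s2"
      proof -
        have a: "suffix 1 t2 = s2" unfolding e(2) by (rule ext) simp
        have b: "t2 0 = e2" unfolding e(2) by simp
        show ?thesis by (simp only: prefix_Suc_split a b)
      qed
      show "\<exists>u1 u2. (prefix (Suc n) t1 \<frown> u1, prefix (Suc n) t2 \<frown> u2) \<in> \<phi>"
        using u unfolding deriv_def p1 p2 by (intro exI[of _ u1] exI[of _ u2]) simp
    qed
  qed

lemma safe_sound: "(t1, t2, \<phi>) \<in> safe \<Longrightarrow> (t1, t2) \<in> safe_closure \<phi>"
  using safe_sound_aux unfolding safe_closure_def by blast

lemma safe_complete: "(t1, t2) \<in> safe_closure \<phi> \<Longrightarrow> (t1, t2, \<phi>) \<in> safe"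
proof -
  let ?X = "{(t1, t2, \<phi>). (t1, t2) \<in> safe_closure \<phi>}"
  have "?X \<subseteq> safeF ?X"
  proof
    fix x assume "x \<in> ?X"
    then obtain t1 t2 \<phi> where x: "x = (t1, t2, \<phi>)" and c: "(t1, t2) \<in> safe_closure \<phi>" by blast
    have c': "\<exists>u1 u2. (prefix n t1 \<frown> u1, prefix n t2 \<frown> u2) \<in> \<phi>" for n
      using c unfolding safe_closure_def by blast
    define s1 where "s1 = suffix 1 t1"
    define s2 where "s2 = suffix 1 t2"
    have t: "t1 = [t1 0] \<frown> s1" "t2 = [t2 0] \<frown> s2" unfolding s1_def s2_def
      using build_split by auto
    have key: "\<exists>u1 u2. (prefix n s1 \<frown> u1, prefix n s2 \<frown> u2) \<in> deriv (t1 0) (t2 0) \<phi>" for n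
    proof -
      obtain u1 u2 where "(prefix (Suc n) t1 \<frown> u1, prefix (Suc n) t2 \<frown> u2) \<in> \<phi>"
        using c' by blast
      then show ?thesis unfolding deriv_def s1_def s2_def
        by (intro exI[of _ u1] exI[of _ u2]) (simp add: prefix_Suc_split del: upt_Suc conc_conc)
    qed
    have ne: "deriv (t1 0) (t2 0) \<phi> \<noteq> {}" using key[of 0] by blast
    have "(s1, s2) \<in> safe_closure (deriv (t1 0) (t2 0) \<phi>)"
      unfolding safe_closure_def using key by blast
    then show "x \<in> safeF ?X" unfolding safeF_def x using ne t
      by (intro CollectI exI[of _ "t1 0"] exI[of _ s1] exI[of _ "t2 0"] exI[of _ s2] exI[of _ \<phi>]) auto
  qed
  then have "?X \<subseteq> safe" unfolding safe_def by (rule gfp_upperbound)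
  then show "(t1, t2) \<in> safe_closure \<phi> \<Longrightarrow> (t1, t2, \<phi>) \<in> safe" by blast
qed

lemma sub_closure: "(t1, t2) \<in> \<psi> \<Longrightarrow> (t1, t2) \<in> safe_closure \<psi>"
  unfolding safe_closure_def
proof (clarsimp)
  fix n assume "(t1, t2) \<in> \<psi>"
  then show "\<exists>a b. (prefix n t1 \<frown> a, prefix n t2 \<frown> b) \<in> \<psi>"
    by (metis prefix_suffix)
qed

theorem mainTheorem4:
  fixes \<psi> :: "('e1, 'e2) trel"
  assumes "safety_relation \<psi>"
  shows "\<forall>\<tau>1 \<tau>2. ((\<tau>1, \<tau>2) \<in> \<psi> \<longleftrightarrow> (\<tau>1, \<tau>2) \<in> safe_closure \<psi>)
                 \<and> ((\<tau>1, \<tau>2) \<in> safe_closure \<psi> \<longleftrightarrow> (\<tau>1, \<tau>2, \<psi>) \<in> safe)"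
  using assms sub_closure safe_sound safe_complete unfolding safety_relation_def by blast

end
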